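(* Let $\Theta$ be a set of hypotheses, $q:\Theta\to\mathbb{R}^k$ a feature map, $\hat L$ the training loss and $V$ the validation loss. Suppose there exist a vector $\lambda^*\in\mathbb{R}^k$ and a scalar $\alpha^*>0$ such that \[ \alpha^*V(\theta)=\hat L(\theta)+\lambda^*\cdot q(\theta)\quad\text{for all }\theta\in\Theta. \] Let $\theta_1,\dots,\theta_{k+1}\in\Theta$ be such that the $k+1$ vectors $(V(\theta_i),\hat L(\theta_i))\oplus q(\theta_i)\in\mathbb{R}^{k+2}$ are linearly independent, where $\oplus$ denotes concatenation. Let $D=\{(V(\theta_i),\hat L(\theta_i),q(\theta_i)) : 1\le i\le k+1\}$. Then LearnLinReg$(D)$ returns $(\alpha^*,\lambda^* )$.
   Context: Algorithm LearnLinReg takes tuples $(V_i,\hat L_i,q_i)$, $1\le i\le m$, with $q_i\in\mathbb{R}^k$, and proceeds as follows. 1. Sort and reindex the tuples so that $V_1\le\dots\le V_m$. 2. For $i^*=1,2,\dots,m$ in turn, solve the linear program in variables $\alpha\in\mathbb{R}$, $\lambda\in\mathbb{R}^k$, $\Delta_i,f_i\in\mathbb{R}$: - minimize $\sum_{i=1}^m\Delta_i$, - subject to $\alpha\ge0$; $\Delta_i\ge0$, $f_i=\alpha V_i+\Delta_i$, $f_i=\lambda\cdot q_i+\hat L_i$ and $f_{i^*}\le f_i$ for all $i$. If this LP is feasible, return its optimal $(\alpha,\lambda)$. 3. If no LP is feasible, return an error. *)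

theory Defs
  imports "HOL-Analysis.Analysis"
begin

text \<open>A data tuple is (V_i, hat L_i, q_i) with q_i in R^k (k = CARD('k)).
  Lists of tuples are 0-indexed: tuple i is ts ! i for i < length ts.\<close>

type_synonym 'k tuple = "real \<times> real \<times> (real ^ 'k)"

definition tV :: "('k::finite) tuple \<Rightarrow> real" where "tV t = fst t"
definition tL :: "('k::finite) tuple \<Rightarrow> real" where "tL t = fst (snd t)"
definition tq :: "('k::finite) tuple \<Rightarrow> real ^ 'k" where "tq t = snd (snd t)"

definition lp_feasible ::
  "('k::finite) tuple list \<Rightarrow> nat \<Rightarrow> real \<Rightarrow> real ^ 'k \<Rightarrow> (nat \<Rightarrow> real) \<Rightarrow> (nat \<Rightarrow> real) \<Rightarrow> bool" where
  "lp_feasible ts istar \<alpha> lam \<Delta> f \<longleftrightarrow>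
     \<alpha> \<ge> 0 \<and>
     (\<forall>i < length ts.
        \<Delta> i \<ge> 0 \<and>
        f i = \<alpha> * tV (ts ! i) + \<Delta> i \<and>
        f i = lam \<bullet> tq (ts ! i) + tL (ts ! i) \<and>
        f istar \<le> f i)"

definition lp_is_feasible :: "('k::finite) tuple list \<Rightarrow> nat \<Rightarrow> bool" where
  "lp_is_feasible ts istar \<longleftrightarrow> (\<exists>\<alpha> lam \<Delta> f. lp_feasible ts istar \<alpha> lam \<Delta> f)"

definition lp_optimal ::
  "('k::finite) tuple list \<Rightarrow> nat \<Rightarrow> real \<Rightarrow> real ^ 'k \<Rightarrow> (nat \<Rightarrow> real) \<Rightarrow> (nat \<Rightarrow> real) \<Rightarrow> bool" where
  "lp_optimal ts istar \<alpha> lam \<Delta> f \<longleftrightarrow>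
     lp_feasible ts istar \<alpha> lam \<Delta> f \<and>
     (\<forall>\<alpha>' lam' \<Delta>' f'. lp_feasible ts istar \<alpha>' lam' \<Delta>' f' \<longrightarrow>
        (\<Sum>i<length ts. \<Delta> i) \<le> (\<Sum>i<length ts. \<Delta>' i))"

definition sorted_reindexing :: "('k::finite) tuple set \<Rightarrow> ('k::finite) tuple list \<Rightarrow> bool" where
  "sorted_reindexing D ts \<longleftrightarrow> set ts = D \<and> distinct ts \<and> sorted (map tV ts)"

text \<open>LearnLinReg run on the sorted list ts returns (alpha, lambda):
  istar is the first index whose LP is feasible, that LP has an optimal solution,
  and every optimal solution of it has (alpha, lambda) as its (alpha, lambda)-part
  (so the returned value is determined).\<close>
definition learnlinreg_run_returns :: "('k::finite) tuple list \<Rightarrow> real \<Rightarrow> real ^ 'k \<Rightarrow> bool" where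
  "learnlinreg_run_returns ts \<alpha> lam \<longleftrightarrow>
     (\<exists>istar < length ts.
        lp_is_feasible ts istar \<and>
        (\<forall>j < istar. \<not> lp_is_feasible ts j) \<and>
        (\<exists>\<Delta> f. lp_optimal ts istar \<alpha> lam \<Delta> f) \<and>
        (\<forall>\<alpha>' lam' \<Delta>' f'. lp_optimal ts istar \<alpha>' lam' \<Delta>' f' \<longrightarrow> \<alpha>' = \<alpha> \<and> lam' = lam))"

text \<open>LearnLinReg(D) returns (alpha, lambda), whichever sorted reindexing
  (ties in V broken arbitrarily) is used in step 1.\<close>
definition LearnLinReg_returns :: "('k::finite) tuple set \<Rightarrow> real \<Rightarrow> real ^ 'k \<Rightarrow> bool" where
  "LearnLinReg_returns D \<alpha> lam \<longleftrightarrow>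
     (\<forall>ts. sorted_reindexing D ts \<longrightarrow> learnlinreg_run_returns ts \<alpha> lam)"

end

theory Submission
  imports Defs
begin

lemma key:
  fixes S :: "(real \<times> real \<times> (real ^ 'k)) set"
  assumes ind: "independent S" and cS: "card S = CARD('k) + 1"
    and h1: "\<forall>x\<in>S. a1 * fst x = fst (snd x) + l1 \<bullet> snd (snd x)"
    and h2: "\<forall>x\<in>S. a2 * fst x = fst (snd x) + l2 \<bullet> snd (snd x)"
  shows "a2 = a1 \<and> l2 = l1"
proof -
  define u :: "real \<times> real \<times> (real ^ 'k)" where "u = (a1, -1, -l1)"
  define w :: "real \<times> real \<times> (real ^ 'k)" where "w = (a2 - a1, 0, -(l2 - l1))"
  define C where "C = {y \<in> (UNIV :: (real \<times> real \<times> (real ^ 'k)) set). \<forall>x \<in> span S. orthogonal x y}"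
  have "dim C + dim (span S) = dim (UNIV :: (real \<times> real \<times> (real ^ 'k)) set)"
    unfolding C_def by (rule dim_subspace_orthogonal_to_vectors) auto
  moreover have "dim (span S) = CARD('k) + 1" using ind cS using dim_eq_card_independent[OF ind] by simp
  moreover have "dim (UNIV :: (real \<times> real \<times> (real ^ 'k)) set) = CARD('k) + 2"
    by (simp only: dim_UNIV DIM_prod DIM_real DIM_cart)
  ultimately have dC: "dim C = 1" by simp
  have uS: "orthogonal x u" if "x \<in> S" for x
  proof -
    obtain a b c where x: "x = (a, b, c)" by (cases x) auto
    have e1: "a1 * a = b + l1 \<bullet> c" using h1 that x by auto
    show ?thesis using e1 by (simp add: x u_def orthogonal_def inner_minus_right inner_commute algebra_simps)
  qed
  have wS: "orthogonal x w" if "x \<in> S" for x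
  proof -
    obtain a b c where x: "x = (a, b, c)" by (cases x) auto
    have e1: "a1 * a = b + l1 \<bullet> c" using h1 that x by auto
    have e2: "a2 * a = b + l2 \<bullet> c" using h2 that x by auto
    show ?thesis using e1 e2 by (simp add: x w_def orthogonal_def inner_diff_right inner_minus_right inner_commute algebra_simps)
  qed
  have uC: "u \<in> C" unfolding C_def
    using orthogonal_to_span[of _ S u] uS by (auto simp: orthogonal_commute)
  have wC: "w \<in> C" unfolding C_def
    using orthogonal_to_span[of _ S w] wS by (auto simp: orthogonal_commute)
  have "w = 0"
  proof (rule ccontr)
    assume wn: "w \<noteq> 0"
    have uw: "u \<noteq> w" by (simp add: u_def w_def)
    have "w \<notin> span {u}"
    proof
      assume "w \<in> span {u}"
      then obtain c where "w = c *\<^sub>R u" by (auto simp: span_singleton)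
      then have "c = 0" by (simp add: u_def w_def)
      with \<open>w = c *\<^sub>R u\<close> wn show False by simp
    qed
    moreover have "u \<noteq> 0" by (simp add: u_def zero_prod_def)
    ultimately have "independent {w, u}"
      by (simp add: independent_insert uw[symmetric])
    then have "card {w, u} \<le> dim C" using uC wC by (intro independent_card_le_dim) auto
    with dC uw show False by simp
  qed
  then show ?thesis by (simp add: w_def zero_prod_def)
qed
theorem theorem1:
  fixes \<Theta> :: "'a set"
    and q :: "'a \<Rightarrow> real ^ 'k"
    and Lhat V :: "'a \<Rightarrow> real"
    and lams :: "real ^ 'k"
    and \<alpha>s :: real
    and \<theta> :: "nat \<Rightarrow> 'a"
  assumes alpha_pos: "\<alpha>s > 0"
    and lin: "\<forall>x\<in>\<Theta>. \<alpha>s * V x = Lhat x + lams \<bullet> q x"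
    and mem: "\<forall>i\<in>{1..CARD('k)+1}. \<theta> i \<in> \<Theta>"
    and indep_inj: "inj_on (\<lambda>i. (V (\<theta> i), Lhat (\<theta> i), q (\<theta> i))) {1..CARD('k)+1}"
    and indep: "independent ((\<lambda>i. (V (\<theta> i), Lhat (\<theta> i), q (\<theta> i))) ` {1..CARD('k)+1})"
  shows "LearnLinReg_returns ((\<lambda>i. (V (\<theta> i), Lhat (\<theta> i), q (\<theta> i))) ` {1..CARD('k)+1}) \<alpha>s lams"
  unfolding LearnLinReg_returns_def
proof (intro allI impI)
  fix ts :: "'k tuple list"
  define D where "D = (\<lambda>i. (V (\<theta> i), Lhat (\<theta> i), q (\<theta> i))) ` {1..CARD('k)+1}"
  assume "sorted_reindexing ((\<lambda>i. (V (\<theta> i), Lhat (\<theta> i), q (\<theta> i))) ` {1..CARD('k)+1}) ts"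
  then have st: "set ts = D" "distinct ts" "sorted (map tV ts)"
    unfolding sorted_reindexing_def D_def by auto
  have cD: "card D = CARD('k) + 1" unfolding D_def using card_image[OF indep_inj] by simp
  have relD: "\<forall>x\<in>D. \<alpha>s * fst x = fst (snd x) + lams \<bullet> snd (snd x)"
    unfolding D_def using lin mem by auto
  have len: "length ts = CARD('k) + 1" using st cD distinct_card by metis
  then have len0: "0 < length ts" by simp
  have inD: "ts ! i \<in> D" if "i < length ts" for i using st that by auto
  have rel: "\<alpha>s * tV (ts ! i) = tL (ts ! i) + lams \<bullet> tq (ts ! i)" if "i < length ts" for i
    using relD inD[OF that] by (simp add: tV_def tL_def tq_def)
  have mono: "tV (ts ! 0) \<le> tV (ts ! i)" if "i < length ts" for i
    using st(3) that len0 by (auto simp: sorted_iff_nth_mono)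
  define f0 where "f0 = (\<lambda>i. \<alpha>s * tV (ts ! i))"
  have feas: "lp_feasible ts 0 \<alpha>s lams (\<lambda>_. 0) f0"
  proof -
    have ineq: "\<alpha>s * tV (ts ! 0) \<le> \<alpha>s * tV (ts ! i)" if "i < length ts" for i
      using mono[OF that] alpha_pos by simp
    have eq: "\<alpha>s * tV (ts ! i) = lams \<bullet> tq (ts ! i) + tL (ts ! i)" if "i < length ts" for i
      using rel[OF that] by simp
    show ?thesis unfolding lp_feasible_def f0_def using alpha_pos ineq eq by simp
  qed
  have opt: "lp_optimal ts 0 \<alpha>s lams (\<lambda>_. 0) f0"
    unfolding lp_optimal_def using feas
    by (auto simp: lp_feasible_def intro!: sum_nonneg)
  have uniq: "\<alpha>' = \<alpha>s \<and> lam' = lams" if o: "lp_optimal ts 0 \<alpha>' lam' \<Delta>' f'" for \<alpha>' lam' \<Delta>' f'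
  proof -
    have fe: "lp_feasible ts 0 \<alpha>' lam' \<Delta>' f'" using o by (simp add: lp_optimal_def)
    have "(\<Sum>i<length ts. \<Delta>' i) \<le> (\<Sum>i<length ts. (\<lambda>_. 0::real) i)"
      using o feas unfolding lp_optimal_def by blast
    moreover have nn: "\<forall>i\<in>{..<length ts}. 0 \<le> \<Delta>' i" using fe by (auto simp: lp_feasible_def)
    ultimately have "(\<Sum>i<length ts. \<Delta>' i) = 0" using sum_nonneg[of "{..<length ts}" \<Delta>'] by simp
    then have z: "\<forall>i\<in>{..<length ts}. \<Delta>' i = 0" using nn sum_nonneg_eq_0_iff[of "{..<length ts}" \<Delta>'] by simp
    have r2: "\<alpha>' * tV (ts ! i) = tL (ts ! i) + lam' \<bullet> tq (ts ! i)" if "i < length ts" for i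
      using fe z that by (auto simp: lp_feasible_def)
    have "\<forall>x\<in>D. \<alpha>' * fst x = fst (snd x) + lam' \<bullet> snd (snd x)"
    proof
      fix x assume "x \<in> D"
      then obtain i where "i < length ts" "x = ts ! i" using st by (metis in_set_conv_nth)
      then show "\<alpha>' * fst x = fst (snd x) + lam' \<bullet> snd (snd x)" using r2 by (simp add: tV_def tL_def tq_def)
    qed
    then show ?thesis using key[OF _ cD relD] indep unfolding D_def by blast
  qed
  show "learnlinreg_run_returns ts \<alpha>s lams"
    unfolding learnlinreg_run_returns_def lp_is_feasible_def
    using len0 feas opt uniq by blast
qed

end
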